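(* Let $n=2k$ and let $P\in\mathbb{H}_n$ be a rank-$k$ orthogonal projection. Then $S^{\mathbb{H}}(P)\cup(-S^{\mathbb{H}}(P))$ contains no two-dimensional real linear subspace of $\mathbb{H}_n$.
   Context: $\mathbb{H}_n$ is the real space of $n\times n$ Hermitian matrices. $w_k(A)=\max\{|\operatorname{tr}(AP)|: P=P^*=P^2,\operatorname{tr}P=k\}$. For a rank-$k$ orthogonal projection $P$, $S^{\mathbb{H}}(P)=\{B\in\mathbb{H}_n:\operatorname{tr}(BP)=w_k(B)\}$. *)

theory Defs
  imports "HOL-Analysis.Analysis"
begin

text \<open>Complex n x n matrices are represented as complex^'n^'n, with n = CARD('n).\<close>

definition cmat_adj :: "complex^'n^'n \<Rightarrow> complex^'n^'n" where
  "cmat_adj A = (\<chi> i j. cnj (A $ j $ i))"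

definition cmat_trace :: "complex^'n^'n \<Rightarrow> complex" where
  "cmat_trace A = (\<Sum>i\<in>UNIV. A $ i $ i)"

definition hermitian_mat :: "complex^'n^'n \<Rightarrow> bool" where
  "hermitian_mat A \<longleftrightarrow> cmat_adj A = A"

text \<open>Orthogonal projection P = P* = P^2 with tr P = k (equivalently, rank k).\<close>
definition orth_proj_k :: "nat \<Rightarrow> complex^'n^'n \<Rightarrow> bool" where
  "orth_proj_k k P \<longleftrightarrow> cmat_adj P = P \<and> P ** P = P \<and> cmat_trace P = of_nat k"

definition wk :: "nat \<Rightarrow> complex^'n^'n \<Rightarrow> real" where
  "wk k A = Sup {cmod (cmat_trace (A ** P)) | P. orth_proj_k k P}"

definition SH :: "nat \<Rightarrow> complex^'n^'n \<Rightarrow> (complex^'n^'n) set" where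
  "SH k P = {B. hermitian_mat B \<and> cmat_trace (B ** P) = complex_of_real (wk k B)}"

end

theory Submission
  imports Defs
begin


definition outer :: "complex^'n \<Rightarrow> complex^'n^'n" where
  "outer u = (\<chi> a b. u$a * cnj (u$b))"
definition cinn :: "complex^'n \<Rightarrow> complex^'n \<Rightarrow> complex" where
  "cinn u v = (\<Sum>a\<in>UNIV. u$a * cnj (v$a))"
definition qf :: "complex^'n^'n \<Rightarrow> complex^'n \<Rightarrow> complex" where
  "qf B u = (\<Sum>a\<in>UNIV. \<Sum>b\<in>UNIV. B$a$b * u$b * cnj (u$a))"

lemma outer_sum_entry: "(\<Sum>u\<in>U. outer u) $ a $ b = (\<Sum>u\<in>U. u$a * cnj (u$b))"
  by (simp add: outer_def)

lemma proj_sum: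
  fixes U :: "(complex^'n) set"
  assumes fin: "finite U" and on: "\<forall>u\<in>U. \<forall>v\<in>U. cinn u v = (if u = v then 1 else 0)"
    and c: "card U = k"
  shows "orth_proj_k k (\<Sum>u\<in>U. outer u)"
proof -
  define Q where "Q = (\<Sum>u\<in>U. outer u)"
  have E: "Q $ a $ b = (\<Sum>u\<in>U. u$a * cnj (u$b))" for a b
    unfolding Q_def by (rule outer_sum_entry)
  have adj: "cmat_adj Q = Q"
    unfolding cmat_adj_def vec_eq_iff by (simp add: E cnj_sum mult.commute)
  have "(Q ** Q) $ a $ b = Q $ a $ b" for a b
  proof -
    have "(Q ** Q) $ a $ b = (\<Sum>l\<in>UNIV. (\<Sum>u\<in>U. u$a * cnj (u$l)) * (\<Sum>v\<in>U. v$l * cnj (v$b)))"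
      by (simp add: matrix_matrix_mult_def E)
    also have "\<dots> = (\<Sum>l\<in>UNIV. \<Sum>u\<in>U. \<Sum>v\<in>U. u$a * cnj (v$b) * (v$l * cnj (u$l)))"
      by (simp add: sum_distrib_left sum_distrib_right mult_ac)
    also have "\<dots> = (\<Sum>u\<in>U. \<Sum>v\<in>U. \<Sum>l\<in>UNIV. u$a * cnj (v$b) * (v$l * cnj (u$l)))"
      by (simp add: sum.swap[of _ UNIV] )
    also have "\<dots> = (\<Sum>u\<in>U. \<Sum>v\<in>U. u$a * cnj (v$b) * cinn v u)"
      by (simp add: cinn_def sum_distrib_left)
    also have "\<dots> = (\<Sum>u\<in>U. \<Sum>v\<in>U. if v = u then u$a * cnj (u$b) else 0)"
      by (intro sum.cong refl) (use on in auto)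
    also have "\<dots> = (\<Sum>u\<in>U. u$a * cnj (u$b))"
      using fin by simp
    finally show ?thesis by (simp add: E)
  qed
  hence sq: "Q ** Q = Q" by (simp add: vec_eq_iff)
  have "cmat_trace Q = (\<Sum>a\<in>UNIV. \<Sum>u\<in>U. u$a * cnj (u$a))"
    by (simp add: cmat_trace_def E)
  also have "\<dots> = (\<Sum>u\<in>U. cinn u u)"
    by (simp add: cinn_def sum.swap[of _ UNIV])
  also have "\<dots> = (\<Sum>u\<in>U. 1)"
    by (intro sum.cong refl) (use on in auto)
  also have "\<dots> = of_nat k" using c by simp
  finally show ?thesis unfolding orth_proj_k_def Q_def[symmetric] using adj sq by simp
qed

lemma trace_proj_sum:
  "cmat_trace (B ** (\<Sum>u\<in>U. outer u)) = (\<Sum>u\<in>U. qf B u)"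
proof -
  have "cmat_trace (B ** (\<Sum>u\<in>U. outer u)) = (\<Sum>a\<in>UNIV. \<Sum>b\<in>UNIV. B$a$b * (\<Sum>u\<in>U. u$b * cnj (u$a)))"
    by (simp add: cmat_trace_def matrix_matrix_mult_def outer_def)
  also have "\<dots> = (\<Sum>u\<in>U. qf B u)"
    by (simp add: qf_def sum_distrib_left sum.swap[of _ U] mult_ac)
  finally show ?thesis .
qed



lemma axis1_nth: "(axis l (1::complex) :: complex^'n) $ b = (if b = l then 1 else 0)"
  by (simp add: axis_def)

lemma mult_if01: "(x::complex) * (if P then 1 else 0) = (if P then x else 0)"
   "(if P then 1 else 0) * (x::complex) = (if P then x else 0)"
   "cnj (if P then 1 else 0) = (if P then 1 else 0)"
  by auto

lemma qf_axis: "qf B (axis l 1) = B$l$l"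
proof -
  have "qf B (axis l 1) = (\<Sum>a\<in>UNIV. if a = l then B$l$l else 0)"
    unfolding qf_def by (intro sum.cong refl) (cases "a = l"; simp add: axis1_nth mult_if01)
  thus ?thesis by simp
qed

lemma cinn_axis: "cinn (axis l 1 :: complex^'n) (axis m 1) = (if l = m then 1 else 0)"
  by (simp add: cinn_def axis1_nth mult_if01)

lemma sum_two:
  fixes f :: "'n::finite \<Rightarrow> complex"
  assumes "i \<noteq> j" "\<And>c. c \<noteq> i \<Longrightarrow> c \<noteq> j \<Longrightarrow> f c = 0"
  shows "(\<Sum>c\<in>UNIV. f c) = f i + f j"
proof -
  have "(\<Sum>c\<in>UNIV. f c) = (\<Sum>c\<in>{i,j}. f c)"
    by (rule sum.mono_neutral_right) (use assms in auto)
  thus ?thesis using assms by simp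
qed

lemma diag_sum:
  fixes B :: "complex^'n^'n"
  assumes H: "\<forall>Q. orth_proj_k k Q \<longrightarrow> cmat_trace (B ** Q) = 0" and c: "card S = k"
  shows "(\<Sum>l\<in>S. B$l$l) = 0"
proof -
  let ?U = "(\<lambda>l. axis l (1::complex) :: complex^'n) ` S"
  have inj: "inj_on (\<lambda>l. axis l (1::complex) :: complex^'n) S"
    by (auto simp: inj_on_def axis_eq_axis)
  have "orth_proj_k k (\<Sum>u\<in>?U. outer u)"
    by (rule proj_sum) (use inj c in \<open>auto simp: cinn_axis card_image axis_eq_axis\<close>)
  with H have "cmat_trace (B ** (\<Sum>u\<in>?U. outer u)) = 0" by blast
  hence "(\<Sum>u\<in>?U. qf B u) = 0" by (simp add: trace_proj_sum)
  thus ?thesis by (simp add: sum.reindex[OF inj] qf_axis)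
qed

definition wv :: "'n \<Rightarrow> 'n \<Rightarrow> complex \<Rightarrow> complex^'n" where
  "wv i j z = (\<chi> c. if c = i then complex_of_real (sqrt (1/2)) else if c = j then complex_of_real (sqrt (1/2)) * z else 0)"

lemma s_sq: "complex_of_real (sqrt (1/2)) * complex_of_real (sqrt (1/2)) = 1/2"
proof -
  have h: "sqrt (1/2) * sqrt (1/2) = (1/2::real)" by simp
  have "complex_of_real (sqrt (1/2)) * complex_of_real (sqrt (1/2)) = complex_of_real (sqrt (1/2) * sqrt (1/2))"
    by (rule of_real_mult[symmetric])
  also have "\<dots> = complex_of_real (1/2)" by (subst h) (rule refl)
  also have "\<dots> = 1/2" by simp
  finally show ?thesis .
qed

lemma qf_wv:
  assumes "i \<noteq> j"
  shows "qf B (wv i j z) = 1/2 * (B$i$i + B$i$j * z + B$j$i * cnj z + B$j$j * (z * cnj z))"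
proof -
  let ?s = "complex_of_real (sqrt (1/2))"
  have w: "wv i j z $ c = (if c = i then ?s else if c = j then ?s * z else 0)" for c
    by (simp add: wv_def)
  have "qf B (wv i j z) = (\<Sum>b\<in>UNIV. B$i$b * wv i j z $ b * cnj (wv i j z $ i)) + (\<Sum>b\<in>UNIV. B$j$b * wv i j z $ b * cnj (wv i j z $ j))"
    unfolding qf_def by (rule sum_two) (use assms in \<open>auto simp: w\<close>)
  also have "\<dots> = (B$i$i * ?s * cnj ?s + B$i$j * (?s * z) * cnj ?s) + (B$j$i * ?s * cnj (?s * z) + B$j$j * (?s*z) * cnj (?s * z))"
    by (subst (1 2) sum_two[OF assms]) (use assms in \<open>auto simp: w\<close>)
  also have "\<dots> = (?s * ?s) * (B$i$i + B$i$j * z + B$j$i * cnj z + B$j$j * (z * cnj z))"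
    by (simp add: algebra_simps)
  finally show ?thesis by (simp add: s_sq)
qed

lemma cinn_wv:
  assumes "i \<noteq> j" "z * cnj z = 1"
  shows "cinn (wv i j z) (wv i j z) = 1"
proof -
  let ?s = "complex_of_real (sqrt (1/2))"
  have w: "wv i j z $ c = (if c = i then ?s else if c = j then ?s * z else 0)" for c
    by (simp add: wv_def)
  have "cinn (wv i j z) (wv i j z) = ?s * cnj ?s + (?s * z) * cnj (?s * z)"
    unfolding cinn_def by (subst sum_two[OF assms(1)]) (use assms in \<open>auto simp: w\<close>)
  also have "\<dots> = (?s * ?s) * (1 + z * cnj z)" by (simp add: algebra_simps)
  finally show ?thesis using assms(2) by (simp add: s_sq)
qed

lemma cinn_axis_wv:
  assumes "l \<noteq> i" "l \<noteq> j"
  shows "cinn (axis l 1) (wv i j z) = 0" "cinn (wv i j z) (axis l 1) = 0"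
  unfolding cinn_def by (intro sum.neutral ballI; use assms in \<open>auto simp: axis1_nth wv_def\<close>)+

lemma offdiag:
  fixes B :: "complex^'n^'n"
  assumes H: "\<forall>Q. orth_proj_k k Q \<longrightarrow> cmat_trace (B ** Q) = 0"
    and ij: "i \<noteq> j" and c: "card L = k - 1" and k: "k \<ge> 1" and L: "i \<notin> L" "j \<notin> L"
    and dz: "\<And>l. B$l$l = 0" and z: "z * cnj z = 1"
  shows "B$i$j * z + B$j$i * cnj z = 0"
proof -
  let ?A = "(\<lambda>l. axis l (1::complex) :: complex^'n) ` L"
  let ?U = "insert (wv i j z) ?A"
  have inj: "inj_on (\<lambda>l. axis l (1::complex) :: complex^'n) L"
    by (auto simp: inj_on_def axis_eq_axis)
  have ni: "wv i j z \<notin> ?A"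
  proof
    assume "wv i j z \<in> ?A"
    then obtain l where "l \<in> L" "wv i j z = axis l 1" by auto
    hence "wv i j z $ i = axis l 1 $ i" by simp
    moreover have "l \<noteq> i" using \<open>l \<in> L\<close> L by auto
    ultimately show False by (simp add: wv_def axis1_nth)
  qed
  have cU: "card ?U = k"
    using ni c k by (simp add: card_image[OF inj])
  have "orth_proj_k k (\<Sum>u\<in>?U. outer u)"
  proof (rule proj_sum[OF _ _ cU])
    show "finite ?U" by simp
    show "\<forall>u\<in>?U. \<forall>v\<in>?U. cinn u v = (if u = v then 1 else 0)"
    proof (intro ballI)
      fix u v assume u: "u \<in> ?U" and v: "v \<in> ?U"
      show "cinn u v = (if u = v then 1 else 0)"
      proof (cases "u = wv i j z")
        case True
        show ?thesis
        proof (cases "v = wv i j z")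
          case True thus ?thesis using \<open>u = wv i j z\<close> cinn_wv[OF ij z] by simp
        next
          case False
          then obtain m where m: "m \<in> L" "v = axis m 1" using v by auto
          have "m \<noteq> i" "m \<noteq> j" using m L by auto
          thus ?thesis using True False m cinn_axis_wv(2)[of m i j z] by simp
        qed
      next
        case False
        then obtain l where l: "l \<in> L" "u = axis l 1" using u by auto
        have li: "l \<noteq> i" "l \<noteq> j" using l L by auto
        show ?thesis
        proof (cases "v = wv i j z")
          case True thus ?thesis using False l li cinn_axis_wv(1)[of l i j z] by simp
        next
          case False
          then obtain m where m: "m \<in> L" "v = axis m 1" using v by auto
          thus ?thesis using l by (simp add: cinn_axis axis_eq_axis)
        qed
      qed
    qed
  qed
  with H have "cmat_trace (B ** (\<Sum>u\<in>?U. outer u)) = 0" by blast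
  hence "(\<Sum>u\<in>?U. qf B u) = 0" by (simp add: trace_proj_sum)
  hence "qf B (wv i j z) + (\<Sum>l\<in>L. qf B (axis l 1)) = 0"
    using ni by (simp add: sum.reindex[OF inj])
  hence "qf B (wv i j z) = 0" by (simp add: qf_axis dz)
  thus ?thesis using qf_wv[OF ij, of B z] dz by simp
qed



lemma kernel:
  fixes B :: "complex^'n^'n"
  assumes n: "CARD('n) = 2*k" and H: "\<forall>Q. orth_proj_k k Q \<longrightarrow> cmat_trace (B ** Q) = 0"
  shows "B = 0"
proof -
  have k: "k \<ge> 1" using n zero_less_card_finite[where 'a='n] by linarith
  have exL: "\<exists>L. card L = k - 1 \<and> i \<notin> L \<and> j \<notin> L" for i j :: 'n
  proof -
    have c2: "card {i,j} \<le> 2" by (cases "i = j") auto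
    have "card (UNIV - {i,j}) = CARD('n) - card {i,j}"
      by (rule card_Diff_subset) auto
    hence "card (UNIV - {i,j}) \<ge> CARD('n) - 2" using c2 by linarith
    hence "k - 1 \<le> card (UNIV - {i,j})" using n by linarith
    then obtain L where "L \<subseteq> UNIV - {i,j}" "card L = k - 1" by (rule obtain_subset_with_card_n)
    thus ?thesis by auto
  qed
  have sumL: "B$i$i + (\<Sum>l\<in>L. B$l$l) = 0" if "card L = k - 1" "i \<notin> L" for i L
  proof -
    have "finite L" using finite[of L] .
    hence "card (insert i L) = k" using that k by simp
    hence "(\<Sum>l\<in>insert i L. B$l$l) = 0" by (rule diag_sum[OF H])
    thus ?thesis using that \<open>finite L\<close> by simp
  qed
  have eq: "B$i$i = B$j$j" for i j
  proof (cases "i = j")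
    case False
    then obtain L where "card L = k - 1" "i \<notin> L" "j \<notin> L" using exL by blast
    from sumL[OF this(1,2)] sumL[OF this(1,3)] show ?thesis by (simp add: eq_neg_iff_add_eq_0[symmetric])
  qed simp
  have dz: "B$l$l = 0" for l
  proof -
    obtain L where L: "card L = k - 1" "l \<notin> L" using exL by blast
    have "(\<Sum>m\<in>L. B$m$m) = (\<Sum>m\<in>L. B$l$l)" by (intro sum.cong refl) (rule eq)
    hence "B$l$l + (\<Sum>m\<in>L. B$l$l) = 0" using sumL[OF L] by simp
    hence "(1 + of_nat (k - 1)) * B$l$l = 0" using L by (simp add: algebra_simps)
    moreover have "(1 + of_nat (k - 1) :: complex) \<noteq> 0"
      by (metis of_nat_Suc of_nat_eq_0_iff nat.distinct(1) add.commute Suc_eq_plus1)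
    ultimately show ?thesis by simp
  qed
  have off: "B$i$j = 0" if ij: "i \<noteq> j" for i j
  proof -
    obtain L where L: "card L = k - 1" "i \<notin> L" "j \<notin> L" using exL by blast
    have 1: "B$i$j * 1 + B$j$i * cnj 1 = 0"
      by (rule offdiag[OF H ij L(1) k L(2,3) dz]) simp
    have 2: "B$i$j * \<i> + B$j$i * cnj \<i> = 0"
      by (rule offdiag[OF H ij L(1) k L(2,3) dz]) simp
    from 1 2 show ?thesis by (simp add: algebra_simps)
  qed
  show ?thesis unfolding vec_eq_iff
    using dz off by (metis zero_index)
qed



lemma proj_entry_bound:
  fixes Q :: "complex^'n^'n"
  assumes "orth_proj_k k Q"
  shows "cmod (Q$a$b) \<le> 1 + real k"
proof -
  have adj: "cmat_adj Q = Q" and sq: "Q ** Q = Q" and tr: "cmat_trace Q = of_nat k"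
    using assms by (auto simp: orth_proj_k_def)
  have "cmat_trace Q = cmat_trace (cmat_adj Q ** Q)" using adj sq by simp
  also have "\<dots> = (\<Sum>i\<in>UNIV. \<Sum>j\<in>UNIV. cnj (Q$j$i) * Q$j$i)"
    by (simp add: cmat_trace_def cmat_adj_def matrix_matrix_mult_def)
  also have "\<dots> = (\<Sum>i\<in>UNIV. \<Sum>j\<in>UNIV. complex_of_real ((cmod (Q$j$i))\<^sup>2))"
    by (intro sum.cong refl) (metis complex_norm_square mult.commute of_real_power)
  also have "\<dots> = complex_of_real (\<Sum>i\<in>UNIV. \<Sum>j\<in>UNIV. (cmod (Q$j$i))\<^sup>2)"
    by simp
  finally have "complex_of_real (\<Sum>i\<in>UNIV. \<Sum>j\<in>UNIV. (cmod (Q$j$i))\<^sup>2) = complex_of_real (real k)"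
    using tr by simp
  hence S: "(\<Sum>i\<in>UNIV. \<Sum>j\<in>UNIV. (cmod (Q$j$i))\<^sup>2) = real k"
    using of_real_eq_iff by blast
  have "(cmod (Q$a$b))\<^sup>2 \<le> (\<Sum>j\<in>UNIV. (cmod (Q$j$b))\<^sup>2)"
    by (rule member_le_sum) auto
  also have "\<dots> \<le> (\<Sum>i\<in>UNIV. \<Sum>j\<in>UNIV. (cmod (Q$j$i))\<^sup>2)"
    by (rule member_le_sum[where f="\<lambda>i. \<Sum>j\<in>UNIV. (cmod (Q$j$i))\<^sup>2"]) (auto intro: sum_nonneg)
  finally have x2: "(cmod (Q$a$b))\<^sup>2 \<le> real k" using S by simp
  show ?thesis
  proof (cases "cmod (Q$a$b) \<le> 1")
    case True thus ?thesis by simp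
  next
    case False
    have "cmod (Q$a$b) * 1 \<le> cmod (Q$a$b) * cmod (Q$a$b)"
      by (rule mult_left_mono) (use False in auto)
    hence "cmod (Q$a$b) \<le> (cmod (Q$a$b))\<^sup>2" by (simp add: power2_eq_square)
    thus ?thesis using x2 by simp
  qed
qed

lemma wk_upper:
  fixes B Q :: "complex^'n^'n"
  assumes "orth_proj_k k Q"
  shows "cmod (cmat_trace (B ** Q)) \<le> wk k B"
proof -
  define M where "M = (\<Sum>i\<in>UNIV. \<Sum>j\<in>UNIV. cmod (B$i$j) * (1 + real k))"
  have bnd: "cmod (cmat_trace (B ** R)) \<le> M" if R: "orth_proj_k k R" for R
  proof -
    have "cmod (cmat_trace (B ** R)) = cmod (\<Sum>i\<in>UNIV. \<Sum>j\<in>UNIV. B$i$j * R$j$i)"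
      by (simp add: cmat_trace_def matrix_matrix_mult_def)
    also have "\<dots> \<le> (\<Sum>i\<in>UNIV. cmod (\<Sum>j\<in>UNIV. B$i$j * R$j$i))" by (rule norm_sum)
    also have "\<dots> \<le> (\<Sum>i\<in>UNIV. \<Sum>j\<in>UNIV. cmod (B$i$j * R$j$i))"
      by (intro sum_mono norm_sum)
    also have "\<dots> \<le> M" unfolding M_def
      by (intro sum_mono) (simp add: norm_mult mult_left_mono proj_entry_bound[OF R])
    finally show ?thesis .
  qed
  show ?thesis unfolding wk_def
    by (rule cSup_upper) (use assms bnd in \<open>auto simp: bdd_above_def\<close>)
qed

lemma trace_lin:
  fixes X Y P :: "complex^'n^'n"
  shows "cmat_trace ((X - c *\<^sub>R Y) ** P) = cmat_trace (X ** P) - of_real c * cmat_trace (Y ** P)"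
    and "cmat_trace ((- X) ** P) = - cmat_trace (X ** P)"
proof -
  have e: "(X - c *\<^sub>R Y) $ i $ j = X$i$j - of_real c * Y$i$j" for i j
    by (simp only: vector_minus_component vector_scaleR_component) (simp add: scaleR_conv_of_real)
  show "cmat_trace ((X - c *\<^sub>R Y) ** P) = cmat_trace (X ** P) - of_real c * cmat_trace (Y ** P)"
  proof -
    have "cmat_trace ((X - c *\<^sub>R Y) ** P) = (\<Sum>i\<in>UNIV. \<Sum>j\<in>UNIV. (X$i$j - of_real c * Y$i$j) * P$j$i)"
      by (simp only: cmat_trace_def matrix_matrix_mult_def vec_lambda_beta e)
    also have "\<dots> = (\<Sum>i\<in>UNIV. \<Sum>j\<in>UNIV. X$i$j * P$j$i) - of_real c * (\<Sum>i\<in>UNIV. \<Sum>j\<in>UNIV. Y$i$j * P$j$i)"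
      by (simp add: left_diff_distrib sum_subtractf sum_distrib_left mult.assoc)
    finally show ?thesis by (simp add: cmat_trace_def matrix_matrix_mult_def)
  qed
  show "cmat_trace ((- X) ** P) = - cmat_trace (X ** P)"
    by (simp add: cmat_trace_def matrix_matrix_mult_def sum_negf)
qed

lemma S_zero:
  fixes C P :: "complex^'n^'n"
  assumes n: "CARD('n) = 2*k" and C: "C \<in> SH k P" and z: "Re (cmat_trace (C ** P)) = 0"
  shows "C = 0"
proof -
  have "cmat_trace (C ** P) = complex_of_real (wk k C)" using C by (simp add: SH_def)
  hence "wk k C = 0" using z by simp
  hence "\<forall>Q. orth_proj_k k Q \<longrightarrow> cmat_trace (C ** Q) = 0"
    using wk_upper[of k _ C] by (metis norm_le_zero_iff)
  thus ?thesis by (rule kernel[OF n])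
qed

theorem mainTheorem17:
  fixes P :: "complex^'n^'n" and k :: nat
  assumes "CARD('n) = 2 * k"
    and "orth_proj_k k P"
  shows "\<not> (\<exists>V. subspace V \<and> dim V = 2 \<and> V \<subseteq> SH k P \<union> uminus ` SH k P)"
proof
  assume "\<exists>V. subspace V \<and> dim V = 2 \<and> V \<subseteq> SH k P \<union> uminus ` SH k P"
  then obtain V where sV: "subspace V" and dV: "dim V = 2" and VS: "V \<subseteq> SH k P \<union> uminus ` SH k P"
    by blast
  define \<phi> where "\<phi> X = Re (cmat_trace (X ** P))" for X :: "complex^'n^'n"
  obtain Bs where Bs: "Bs \<subseteq> V" "independent Bs" "card Bs = dim V"
    by (rule basis_exists)
  then obtain b1 b2 where b: "Bs = {b1, b2}" "b1 \<noteq> b2" using dV by (auto simp: card_2_iff)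
  have ind: "independent {b2}" "b1 \<notin> span {b2}"
    using Bs(2) b by (auto simp: independent_insert)
  have b2nz: "b2 \<noteq> 0" using ind(1) dependent_zero by blast
  have inV: "b1 \<in> V" "b2 \<in> V" using Bs b by auto
  have "\<exists>B\<in>V. B \<noteq> 0 \<and> \<phi> B = 0"
  proof (cases "\<phi> b2 = 0")
    case True thus ?thesis using inV b2nz by blast
  next
    case False
    define B where "B = b1 - (\<phi> b1 / \<phi> b2) *\<^sub>R b2"
    have "B \<in> V" unfolding B_def using sV inV by (intro subspace_diff subspace_scale) auto
    moreover have "\<phi> B = 0" using False by (simp add: B_def \<phi>_def trace_lin)
    moreover have "B \<noteq> 0"
    proof
      assume "B = 0"
      hence "b1 = (\<phi> b1 / \<phi> b2) *\<^sub>R b2" by (simp add: B_def)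
      hence "b1 \<in> span {b2}" by (metis span_base span_mul singletonI scaleR_conv_of_real span_scale)
      thus False using ind(2) by blast
    qed
    ultimately show ?thesis by blast
  qed
  then obtain B where B: "B \<in> V" "B \<noteq> 0" "\<phi> B = 0" by blast
  from B(1) VS have "B \<in> SH k P \<or> B \<in> uminus ` SH k P" by blast
  thus False
  proof
    assume "B \<in> SH k P"
    hence "B = 0" using S_zero[OF assms(1)] B(3) by (simp add: \<phi>_def)
    thus False using B(2) by simp
  next
    assume "B \<in> uminus ` SH k P"
    then obtain C where C: "C \<in> SH k P" "B = - C" by blast
    have "Re (cmat_trace (C ** P)) = 0" using B(3) C(2) by (simp add: \<phi>_def trace_lin)
    hence "C = 0" using S_zero[OF assms(1) C(1)] by simp
    thus False using B(2) C(2) by simp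
  qed
qed


end
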